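(* Let $P,PA$ be labelings, $pc$ a label, $c$ a command with $P;PA\vdash_{pc}c$, and $\rho_1\sim_P\rho_2$, $\mu_1\sim_{PA}\mu_2$. If $\langle c,\rho_1,\mu_1,\beta\rangle\xrightarrow[d]{o}{}_i\langle c_1,\rho_1',\mu_1',\beta_1\rangle$ and $\langle c,\rho_2,\mu_2,\beta\rangle\xrightarrow[d]{o}{}_i\langle c_2,\rho_2',\mu_2',\beta_2\rangle$ (same directive $d$ and same observation $o$) in the ideal semantics w.r.t. $P$, then $c_1=c_2$, $\beta_1=\beta_2$, $\rho_1'\sim_P\rho_2'$ and $\mu_1'\sim_{PA}\mu_2'$.
   Context: Language AWhile: scalar variables $X\in\mathcal V$, arrays $a\in\mathcal A$; $e::=n\mid X\mid\mathrm{op}_{\mathbb N}(e,\dots,e)\mid be\,?\,e_1:e_2$; $be::=\mathtt{true}\mid\mathtt{false}\mid\mathrm{cmp}(e,e)\mid\mathrm{op}_{\mathbb B}(be,\dots,be)$; $c::=\mathtt{skip}\mid X:=e\mid c_1;c_2\mid\mathtt{if}\ be\ \mathtt{then}\ c_1\ \mathtt{else}\ c_2\mid\mathtt{while}\ be\ \mathtt{do}\ c\mid X\leftarrow a[e]\mid a[e]\leftarrow e'$. Scalar state $\rho:\mathcal V\to\mathbb N$; array state $\mu$ with sizes $|a|_\mu$ and values $\mu(a)[i]$; $[\![\cdot]\!]_\rho$ pure evaluation. Labels: $\mathtt{true}$=public, $\mathtt{false}$=secret; $\ell_1\sqsubseteq\ell_2$ iff $\ell_2=\mathtt{true}\Rightarrow\ell_1=\mathtt{true}$;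 $\ell_1\sqcup\ell_2=\ell_1\wedge\ell_2$. $P:\mathcal V\to$ labels, $PA:\mathcal A\to$ labels; $P(e),P(be)$ public iff all variables occurring are public. $\rho_1\sim_P\rho_2$ iff they agree on all public scalar variables; $\mu_1\sim_{PA}\mu_2$ iff they agree on sizes and contents of all public arrays. IFC typing $P;PA\vdash_{pc}c$: $\mathtt{skip}$; $X:=e$ if $pc\sqcup P(e)\sqsubseteq P(X)$; $c_1;c_2$ if both typed under $pc$; $\mathtt{if}$ if both branches typed under $pc\sqcup P(be)$; $\mathtt{while}$ if body typed under $pc\sqcup P(be)$; $X\leftarrow a[i]$ if $pc\sqcup P(i)\sqcup PA(a)\sqsubseteq P(X)$; $a[i]\leftarrow e$ if $pc\sqcup P(i)\sqcup P(e)\sqsubseteq PA(a)$. Ideal semantics w.r.t. $P$: configurations $\langle c,\rho,\mu,\beta\rangle$, $\beta$ a boolean misspeculation flag; steps $\xrightarrow[d]{o}{}_i$ with optional observation $o\in\{\mathrm{branch}(v),\mathrm{read}(a,i),\mathrm{write}(a,i)\}$ and optional directive $d\in\{\mathit{step},\mathit{force},\mathrm{load}(a',j),\mathrm{store}(a',j)\}$. $X:=e\to\mathtt{skip}$ with $\rho[X\mapsto[\![e]\!]_\rho]$; $c_1;c_2\to c_1';c_2$ whenever $c_1\to c_1'$ (same labels and state change); $\mathtt{skip};c\to c$; $\mathtt{while}\ be\ \mathtt{do}\ c\to\mathtt{if}\ be\ \mathtt{then}\ (c;\mathtt{while}\ be\ \mathtt{do}\ c)\ \mathtt{else}\ \mathtt{skip}$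 (no obs/directive, flag kept). Conditional: let $v=(P(be)\vee\neg\beta)\wedge[\![be]\!]_\rho$; with $\mathit{step}$ go to branch $v$, flag kept; with $\mathit{force}$ go to branch $\neg v$, flag set to $\mathtt{true}$; obs $\mathrm{branch}(v)$. Read $X\leftarrow a[ie]$ with $\mathit{step}$: $i=0$ if $(P(ie)=\mathtt{false}\vee P(X)=\mathtt{true})\wedge\beta$, else $i=[\![ie]\!]_\rho$; requires $i<|a|_\mu$; $X:=\mu(a)[i]$; obs $\mathrm{read}(a,i)$. Read with $\mathrm{load}(a',j)$: requires $\beta=\mathtt{true}$, $P(ie)=\mathtt{true}$, $P(X)=\mathtt{false}$, $i=[\![ie]\!]_\rho\ge|a|_\mu$, $j<|a'|_\mu$; $X:=\mu(a')[j]$; obs $\mathrm{read}(a,i)$. Write $a[ie]\leftarrow ae$ with $\mathit{step}$: $i=0$ if $(P(ie)=\mathtt{false}\vee P(ae)=\mathtt{false})\wedge\beta$, else $[\![ie]\!]_\rho$; requires $i<|a|_\mu$; $\mu[a[i]\mapsto[\![ae]\!]_\rho]$; obs $\mathrm{write}(a,i)$. Write with $\mathrm{store}(a',j)$: requires $\beta=\mathtt{true}$, $P(ie)=P(ae)=\mathtt{true}$, $i=[\![ie]\!]_\rho\ge|a|_\mu$, $j<|a'|_\mu$; $\mu[a'[j]\mapsto[\![ae]\!]_\rho]$; obs $\mathrm{write}(a,i)$. *)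

theory Defs
  imports Main
begin

type_synonym vname = string
type_synonym aname = string
type_synonym label = bool   (* True = public, False = secret *)

datatype aexp = ANum nat | AId vname | AOp "nat list \<Rightarrow> nat" "aexp list"
  | ACTIf bexp aexp aexp
and bexp = BTrue | BFalse | BCmp "nat \<Rightarrow> nat \<Rightarrow> bool" aexp aexp
  | BOp "bool list \<Rightarrow> bool" "bexp list"

datatype com = Skip
  | Asgn vname aexp
  | Seq com com
  | If bexp com com
  | While bexp com
  | ARead vname aname aexp
  | AWrite aname aexp aexp

type_synonym state = "vname \<Rightarrow> nat"
type_synonym mem = "aname \<Rightarrow> nat list"

primrec aeval :: "state \<Rightarrow> aexp \<Rightarrow> nat" and beval :: "state \<Rightarrow> bexp \<Rightarrow> bool" where
  "aeval \<rho> (ANum n) = n"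
| "aeval \<rho> (AId X) = \<rho> X"
| "aeval \<rho> (AOp f es) = f (map (aeval \<rho>) es)"
| "aeval \<rho> (ACTIf b e1 e2) = (if beval \<rho> b then aeval \<rho> e1 else aeval \<rho> e2)"
| "beval \<rho> BTrue = True"
| "beval \<rho> BFalse = False"
| "beval \<rho> (BCmp f e1 e2) = f (aeval \<rho> e1) (aeval \<rho> e2)"
| "beval \<rho> (BOp f bs) = f (map (beval \<rho>) bs)"

primrec avars :: "aexp \<Rightarrow> vname set" and bvars :: "bexp \<Rightarrow> vname set" where
  "avars (ANum n) = {}"
| "avars (AId X) = {X}"
| "avars (AOp f es) = \<Union> (set (map avars es))"
| "avars (ACTIf b e1 e2) = bvars b \<union> avars e1 \<union> avars e2"
| "bvars BTrue = {}"
| "bvars BFalse = {}"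
| "bvars (BCmp f e1 e2) = avars e1 \<union> avars e2"
| "bvars (BOp f bs) = \<Union> (set (map bvars bs))"

definition can_flow :: "label \<Rightarrow> label \<Rightarrow> bool" where
  "can_flow l1 l2 \<longleftrightarrow> (l2 = True \<longrightarrow> l1 = True)"

definition join :: "label \<Rightarrow> label \<Rightarrow> label" where
  "join l1 l2 = (l1 \<and> l2)"

definition label_of_aexp :: "(vname \<Rightarrow> label) \<Rightarrow> aexp \<Rightarrow> label" where
  "label_of_aexp P e \<longleftrightarrow> (\<forall>X\<in>avars e. P X)"

definition label_of_bexp :: "(vname \<Rightarrow> label) \<Rightarrow> bexp \<Rightarrow> label" where
  "label_of_bexp P b \<longleftrightarrow> (\<forall>X\<in>bvars b. P X)"

definition pub_equiv :: "(vname \<Rightarrow> label) \<Rightarrow> state \<Rightarrow> state \<Rightarrow> bool" where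
  "pub_equiv P \<rho>1 \<rho>2 \<longleftrightarrow> (\<forall>X. P X \<longrightarrow> \<rho>1 X = \<rho>2 X)"

definition pub_equiv_mem :: "(aname \<Rightarrow> label) \<Rightarrow> mem \<Rightarrow> mem \<Rightarrow> bool" where
  "pub_equiv_mem PA \<mu>1 \<mu>2 \<longleftrightarrow>
     (\<forall>a. PA a \<longrightarrow> length (\<mu>1 a) = length (\<mu>2 a) \<and> (\<forall>i < length (\<mu>1 a). \<mu>1 a ! i = \<mu>2 a ! i))"

inductive well_typed :: "(vname \<Rightarrow> label) \<Rightarrow> (aname \<Rightarrow> label) \<Rightarrow> label \<Rightarrow> com \<Rightarrow> bool" where
  WT_Skip: "well_typed P PA pc Skip"
| WT_Asgn: "can_flow (join pc (label_of_aexp P e)) (P X) \<Longrightarrow> well_typed P PA pc (Asgn X e)"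
| WT_Seq: "well_typed P PA pc c1 \<Longrightarrow> well_typed P PA pc c2 \<Longrightarrow> well_typed P PA pc (Seq c1 c2)"
| WT_If: "well_typed P PA (join pc (label_of_bexp P b)) c1 \<Longrightarrow>
          well_typed P PA (join pc (label_of_bexp P b)) c2 \<Longrightarrow> well_typed P PA pc (If b c1 c2)"
| WT_While: "well_typed P PA (join pc (label_of_bexp P b)) c \<Longrightarrow> well_typed P PA pc (While b c)"
| WT_ARead: "can_flow (join (join pc (label_of_aexp P i)) (PA a)) (P X) \<Longrightarrow>
             well_typed P PA pc (ARead X a i)"
| WT_AWrite: "can_flow (join (join pc (label_of_aexp P i)) (label_of_aexp P e)) (PA a) \<Longrightarrow>
              well_typed P PA pc (AWrite a i e)"

datatype observation = OBranch bool | ORead aname nat | OWrite aname nat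
datatype directive = DStep | DForce | DLoad aname nat | DStore aname nat

type_synonym config = "com \<times> state \<times> mem \<times> bool"

inductive ideal_step :: "(vname \<Rightarrow> label) \<Rightarrow> config \<Rightarrow> directive option \<Rightarrow> observation option
                          \<Rightarrow> config \<Rightarrow> bool" where
  Ideal_Asgn: "ideal_step P (Asgn X e, \<rho>, \<mu>, b) None None (Skip, \<rho>(X := aeval \<rho> e), \<mu>, b)"
| Ideal_Seq: "ideal_step P (c1, \<rho>, \<mu>, b) d ob (c1', \<rho>', \<mu>', b') \<Longrightarrow>
              ideal_step P (Seq c1 c2, \<rho>, \<mu>, b) d ob (Seq c1' c2, \<rho>', \<mu>', b')"
| Ideal_Seq_Skip: "ideal_step P (Seq Skip c, \<rho>, \<mu>, b) None None (c, \<rho>, \<mu>, b)"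
| Ideal_While: "ideal_step P (While be c, \<rho>, \<mu>, b) None None
                  (If be (Seq c (While be c)) Skip, \<rho>, \<mu>, b)"
| Ideal_If: "v = ((label_of_bexp P be \<or> \<not> b) \<and> beval \<rho> be) \<Longrightarrow>
             ideal_step P (If be c1 c2, \<rho>, \<mu>, b) (Some DStep) (Some (OBranch v))
               (if v then c1 else c2, \<rho>, \<mu>, b)"
| Ideal_If_F: "v = ((label_of_bexp P be \<or> \<not> b) \<and> beval \<rho> be) \<Longrightarrow>
             ideal_step P (If be c1 c2, \<rho>, \<mu>, b) (Some DForce) (Some (OBranch v))
               (if v then c2 else c1, \<rho>, \<mu>, True)"
| Ideal_ARead: "i = (if (\<not> label_of_aexp P ie \<or> P X) \<and> b then 0 else aeval \<rho> ie) \<Longrightarrow>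
                i < length (\<mu> a) \<Longrightarrow>
                ideal_step P (ARead X a ie, \<rho>, \<mu>, b) (Some DStep) (Some (ORead a i))
                  (Skip, \<rho>(X := \<mu> a ! i), \<mu>, b)"
| Ideal_ARead_U: "b = True \<Longrightarrow> label_of_aexp P ie \<Longrightarrow> \<not> P X \<Longrightarrow>
                i = aeval \<rho> ie \<Longrightarrow> i \<ge> length (\<mu> a) \<Longrightarrow> j < length (\<mu> a') \<Longrightarrow>
                ideal_step P (ARead X a ie, \<rho>, \<mu>, b) (Some (DLoad a' j)) (Some (ORead a i))
                  (Skip, \<rho>(X := \<mu> a' ! j), \<mu>, b)"
| Ideal_AWrite: "i = (if (\<not> label_of_aexp P ie \<or> \<not> label_of_aexp P ae) \<and> b then 0 else aeval \<rho> ie) \<Longrightarrow>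
                i < length (\<mu> a) \<Longrightarrow>
                ideal_step P (AWrite a ie ae, \<rho>, \<mu>, b) (Some DStep) (Some (OWrite a i))
                  (Skip, \<rho>, \<mu>(a := (\<mu> a)[i := aeval \<rho> ae]), b)"
| Ideal_AWrite_U: "b = True \<Longrightarrow> label_of_aexp P ie \<Longrightarrow> label_of_aexp P ae \<Longrightarrow>
                i = aeval \<rho> ie \<Longrightarrow> i \<ge> length (\<mu> a) \<Longrightarrow> j < length (\<mu> a') \<Longrightarrow>
                ideal_step P (AWrite a ie ae, \<rho>, \<mu>, b) (Some (DStore a' j)) (Some (OWrite a i))
                  (Skip, \<rho>, \<mu>(a' := (\<mu> a')[j := aeval \<rho> ae]), b)"

end

theory Submission
  imports Defs
begin

lemma noninterf_exp:
  "(\<forall>X\<in>avars e. P X) \<Longrightarrow> pub_equiv P r1 r2 \<Longrightarrow> aeval r1 e = aeval r2 e"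
  "(\<forall>X\<in>bvars b. P X) \<Longrightarrow> pub_equiv P r1 r2 \<Longrightarrow> beval r1 b = beval r2 b"
proof (induction e and b)
  case (AOp f es)
  then have "map (aeval r1) es = map (aeval r2) es" by (auto intro!: map_cong)
  then show ?case by (simp only: aeval.simps)
next
  case (BOp f bs)
  then have "map (beval r1) bs = map (beval r2) bs" by (auto intro!: map_cong)
  then show ?case by (simp only: beval.simps)
qed (auto simp: pub_equiv_def)

lemma ni_a: "label_of_aexp P e \<Longrightarrow> pub_equiv P r1 r2 \<Longrightarrow> aeval r1 e = aeval r2 e"
  using noninterf_exp(1) label_of_aexp_def by metis

lemma skip_nostep: "ideal_step P (Skip, r, m, b) d ob cf \<Longrightarrow> False"
  by (cases rule: ideal_step.cases) auto


lemma pem_upd: "pub_equiv_mem PA m1 m2 \<Longrightarrow> (PA a \<Longrightarrow> v1 = v2) \<Longrightarrow>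
   pub_equiv_mem PA (m1(a := (m1 a)[k := v1])) (m2(a := (m2 a)[k := v2]))"
  unfolding pub_equiv_mem_def
  apply (auto)
  subgoal for i by (cases "k < length (m1 a)") (auto simp: nth_list_update list_update_beyond)
  done

lemma write_case:
  assumes wt: "well_typed P PA pc (AWrite a ie ae)" and pe: "pub_equiv P \<rho>1 \<rho>2"
    and pm: "pub_equiv_mem PA \<mu>1 \<mu>2"
    and s1: "ideal_step P (AWrite a ie ae, \<rho>1, \<mu>1, \<beta>) d ob (c1, \<rho>1', \<mu>1', \<beta>1)"
    and s2: "ideal_step P (AWrite a ie ae, \<rho>2, \<mu>2, \<beta>) d ob (c2, \<rho>2', \<mu>2', \<beta>2)"
  shows "c1 = c2 \<and> \<beta>1 = \<beta>2 \<and> pub_equiv P \<rho>1' \<rho>2' \<and> pub_equiv_mem PA \<mu>1' \<mu>2'"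
proof -
  from wt have t: "PA a \<Longrightarrow> label_of_aexp P ae" by (auto elim: well_typed.cases simp: can_flow_def join_def)
  have ev: "label_of_aexp P ae \<Longrightarrow> aeval \<rho>1 ae = aeval \<rho>2 ae" using ni_a pe by blast
  have len: "PA x \<Longrightarrow> length (\<mu>1 x) = length (\<mu>2 x)" for x using pm by (simp add: pub_equiv_mem_def)
  from s1 show ?thesis
  proof (cases rule: ideal_step.cases)
    case (Ideal_AWrite i)
    note o = this
    from s2 show ?thesis
    proof (cases rule: ideal_step.cases)
      case (Ideal_AWrite i')
      then show ?thesis using o pe pem_upd[OF pm, of a] t ev len by auto
    qed (use o in auto)
  next
    case (Ideal_AWrite_U i j a')
    note o = this
    from s2 show ?thesis
    proof (cases rule: ideal_step.cases)
      case (Ideal_AWrite_U i' j' a'')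
      then show ?thesis using o pe pem_upd[OF pm, of a'] ev len by auto
    qed (use o in auto)
  qed
qed

lemma aux:
  assumes "ideal_step P cf d ob cf'"
  shows "\<And>c \<rho>1 \<mu>1 \<beta> c1 \<rho>1' \<mu>1' \<beta>1 pc c2 \<rho>2 \<mu>2 \<rho>2' \<mu>2' \<beta>2.
    cf = (c, \<rho>1, \<mu>1, \<beta>) \<Longrightarrow> cf' = (c1, \<rho>1', \<mu>1', \<beta>1) \<Longrightarrow>
    well_typed P PA pc c \<Longrightarrow> pub_equiv P \<rho>1 \<rho>2 \<Longrightarrow> pub_equiv_mem PA \<mu>1 \<mu>2 \<Longrightarrow>
    ideal_step P (c, \<rho>2, \<mu>2, \<beta>) d ob (c2, \<rho>2', \<mu>2', \<beta>2) \<Longrightarrow>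
    ideal_step P (c, \<rho>1, \<mu>1, \<beta>) d ob (c1, \<rho>1', \<mu>1', \<beta>1) \<Longrightarrow>
    c1 = c2 \<and> \<beta>1 = \<beta>2 \<and> pub_equiv P \<rho>1' \<rho>2' \<and> pub_equiv_mem PA \<mu>1' \<mu>2'"
  using assms
proof (induction rule: ideal_step.induct)
  case (Ideal_Asgn P X e \<rho> \<mu> b)
  from Ideal_Asgn.prems(6) Ideal_Asgn.prems(1,2) have
    "c2 = Skip" "\<beta>2 = b" "\<rho>2' = \<rho>2(X := aeval \<rho>2 e)" "\<mu>2' = \<mu>2"
    by (auto elim: ideal_step.cases)
  moreover from Ideal_Asgn.prems(3) Ideal_Asgn.prems(1) have "P X \<longrightarrow> label_of_aexp P e"
    by (auto elim: well_typed.cases simp: can_flow_def join_def)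
  ultimately show ?case using Ideal_Asgn.prems ni_a[of P e \<rho>1 \<rho>2]
    by (auto simp: pub_equiv_def)
next
  case (Ideal_Seq P x1 r m b d ob x1' r' m' b' x2)
  from Ideal_Seq.prems(1) have e: "c = Seq x1 x2" "r = \<rho>1" "m = \<mu>1" "b = \<beta>" by auto
  from Ideal_Seq.prems(2) have e2: "c1 = Seq x1' x2" "r' = \<rho>1'" "m' = \<mu>1'" "b' = \<beta>1" by auto
  from Ideal_Seq.prems(3) e obtain pc' where w: "well_typed P PA pc' x1"
    by (auto elim: well_typed.cases)
  have ns: "x1 \<noteq> Skip" using Ideal_Seq.hyps skip_nostep by blast
  from Ideal_Seq.prems(6) e ns obtain y1 where
    s2: "ideal_step P (x1, \<rho>2, \<mu>2, b) d ob (y1, \<rho>2', \<mu>2', \<beta>2)" "c2 = Seq y1 x2"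
    by (cases rule: ideal_step.cases) auto
  have "x1' = y1 \<and> b' = \<beta>2 \<and> pub_equiv P r' \<rho>2' \<and> pub_equiv_mem PA m' \<mu>2'"
    by (rule Ideal_Seq.IH[OF refl refl w _ _ s2(1) Ideal_Seq.hyps]) (use Ideal_Seq.prems e in auto)
  then show ?case using s2(2) e2 by auto
next
  case Ideal_Seq_Skip
  from Ideal_Seq_Skip.prems(6) show ?case using Ideal_Seq_Skip by (cases rule: ideal_step.cases) (auto dest: skip_nostep)
next
  case Ideal_While
  from Ideal_While.prems(6) show ?case using Ideal_While by (cases rule: ideal_step.cases) (auto dest: skip_nostep)
next
  case Ideal_If
  from Ideal_If.prems(6) show ?case using Ideal_If by (cases rule: ideal_step.cases) (auto dest: skip_nostep)
next
  case Ideal_If_F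
  from Ideal_If_F.prems(6) show ?case using Ideal_If_F by (cases rule: ideal_step.cases) (auto dest: skip_nostep)
next
  case Ideal_ARead
  from Ideal_ARead.prems(6) show ?case using Ideal_ARead by (cases rule: ideal_step.cases) (auto elim!: well_typed.cases simp: pub_equiv_def pub_equiv_mem_def can_flow_def join_def)
next
  case Ideal_ARead_U
  from Ideal_ARead_U.prems(6) show ?case using Ideal_ARead_U by (cases rule: ideal_step.cases) (auto elim!: well_typed.cases simp: pub_equiv_def pub_equiv_mem_def can_flow_def join_def)
next
  case Ideal_AWrite
  from Ideal_AWrite.prems(1) obtain a ie ae where c: "c = AWrite a ie ae" by auto
  show ?case by (rule write_case[OF Ideal_AWrite.prems(3-5)[unfolded c] Ideal_AWrite.prems(7)[unfolded c] Ideal_AWrite.prems(6)[unfolded c]])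
next
  case Ideal_AWrite_U
  from Ideal_AWrite_U.prems(1) obtain a ie ae where c: "c = AWrite a ie ae" by auto
  show ?case by (rule write_case[OF Ideal_AWrite_U.prems(3-5)[unfolded c] Ideal_AWrite_U.prems(7)[unfolded c] Ideal_AWrite_U.prems(6)[unfolded c]])
qed

theorem lemma5p2:
  fixes P :: "vname \<Rightarrow> label" and PA :: "aname \<Rightarrow> label" and pc :: label and c :: com
  assumes "well_typed P PA pc c"
    and "pub_equiv P \<rho>1 \<rho>2"
    and "pub_equiv_mem PA \<mu>1 \<mu>2"
    and "ideal_step P (c, \<rho>1, \<mu>1, \<beta>) d ob (c1, \<rho>1', \<mu>1', \<beta>1)"
    and "ideal_step P (c, \<rho>2, \<mu>2, \<beta>) d ob (c2, \<rho>2', \<mu>2', \<beta>2)"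
  shows "c1 = c2 \<and> \<beta>1 = \<beta>2 \<and> pub_equiv P \<rho>1' \<rho>2' \<and> pub_equiv_mem PA \<mu>1' \<mu>2'"
  using aux[OF assms(4) refl refl assms(1-3,5,4)] .

end
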